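(* Let $\mathcal{N}$ be a sound, acyclic, deterministic negotiation and $B\subseteq N$, and suppose Eve has a deterministic positional winning strategy $\sigma$ in the game $G(\mathcal{N},B)$. Let $S$ be the set of nodes of $\mathcal{N}$ that are reached on some play from $n_{\mathit{init}}$ respecting $\sigma$. Then there exists a successful run of $\mathcal{N}$ whose set of occurring nodes is precisely $S$.
   Context: A negotiation is a tuple $\mathcal{N}=(\mathit{Proc},N,\mathit{dom},R,\delta)$ where $\mathit{Proc}$ is a finite set of processes, $N$ is a finite set of nodes, $\mathit{dom}:N\to 2^{\mathit{Proc}}\setminus\{\emptyset\}$, there are two distinguished nodes $n_{\mathit{init}},n_{\mathit{fin}}$ with $\mathit{dom}(n_{\mathit{init}})=\mathit{dom}(n_{\mathit{fin}})=\mathit{Proc}$, $R$ is a set of results, each node $n$ has a set $\mathit{out}(n)\subseteq R$ of results (nonempty for $n\neq n_{\mathit{fin}}$), and $\delta(n,a,p)\subseteq N$ is defined and nonempty exactly when $a\in\mathit{out}(n)$ and $p\in\mathit{dom}(n)$, with $p\in\mathit{dom}(n')$ for all $n'\in\delta(n,a,p)$. $\mathcal{N}$ is deterministic if every $\delta(n,a,p)$ is a singleton, identified with its element. A configuration is a map $C$ assigning to each process a nonempty set of nodes; $C_{\mathit{init}}(p)=\{n_{\mathit{init}}\}$, $C_{\mathit{fin}}(p)=\{n_{\mathit{fin}}\}$. A node $n$ is enabled in $C$ if $n\in C(p)$ for all $p\in\mathit{dom}(n)$. If $n$ is enabled and $a\in\mathit{out}(n)$ then $C\xrightarrow{(n,a)}C'$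 with $C'(p)=\delta(n,a,p)$ for $p\in\mathit{dom}(n)$, $C'(p)=C(p)$ otherwise. A run is a sequence $(n_1,a_1)(n_2,a_2)\cdots$ of such steps; a successful run is a finite run from $C_{\mathit{init}}$ to $C_{\mathit{fin}}$; $\mathcal{N}$ is sound if every finite run from $C_{\mathit{init}}$ can be extended to a successful run. The graph of $\mathcal{N}$ has vertex set $N$ and edges $n\to n'$ whenever $n'\in\delta(n,a,p)$ for some $a,p$; $\mathcal{N}$ is acyclic if this graph is. The two-player game $G(\mathcal{N},B)$ (players Eve and Adam) for deterministic $\mathcal{N}$ and $B\subseteq N$: Eve's positions are $N\setminus B$, Adam's positions are $N\times R$; the moves are $n\to(n,a)$ for $n\in N\setminus B$, $a\in\mathit{out}(n)$, and $(n,a)\to\delta(n,a,p)$ for $n\in N$, $a\in\mathit{out}(n)$, $p\in\mathit{dom}(n)$. The initial position is $n_{\mathit{init}}$; a play is a maximal path from it. Adam wins a play if it reaches a node of $B$; Eve wins if it reaches $n_{\mathit{fin}}$. A deterministic positional strategy for Eve is a function $\sigma:N\to R$ (with $\sigma(n)\in\mathit{out}(n)$); a play respects $\sigma$ if from each Eve position $n$ it moves to $(n,\sigma(n))$; $\sigma$ is winning if every play from $n_{\mathit{init}}$ respecting $\sigma$ is won by Eve. *)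

theory Defs
  imports Main
begin

record ('p, 'n, 'r) nego =
  Proc  :: "'p set"
  Nodes :: "'n set"
  ndom  :: "'n \<Rightarrow> 'p set"
  ninit :: 'n
  nfin  :: 'n
  Res   :: "'r set"
  out   :: "'n \<Rightarrow> 'r set"
  delta :: "'n \<Rightarrow> 'r \<Rightarrow> 'p \<Rightarrow> 'n set"

definition negotiation :: "('p, 'n, 'r) nego \<Rightarrow> bool" where
  "negotiation \<N> \<longleftrightarrow>
     finite (Proc \<N>) \<and> finite (Nodes \<N>) \<and>
     ninit \<N> \<in> Nodes \<N> \<and> nfin \<N> \<in> Nodes \<N> \<and>
     (\<forall>n\<in>Nodes \<N>. ndom \<N> n \<subseteq> Proc \<N> \<and> ndom \<N> n \<noteq> {}) \<and>
     ndom \<N> (ninit \<N>) = Proc \<N> \<and> ndom \<N> (nfin \<N>) = Proc \<N> \<and>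
     (\<forall>n\<in>Nodes \<N>. out \<N> n \<subseteq> Res \<N>) \<and>
     (\<forall>n\<in>Nodes \<N>. n \<noteq> nfin \<N> \<longrightarrow> out \<N> n \<noteq> {}) \<and>
     (\<forall>n\<in>Nodes \<N>. \<forall>a p. delta \<N> n a p \<noteq> {} \<longleftrightarrow> a \<in> out \<N> n \<and> p \<in> ndom \<N> n) \<and>
     (\<forall>n\<in>Nodes \<N>. \<forall>a\<in>out \<N> n. \<forall>p\<in>ndom \<N> n.
        delta \<N> n a p \<subseteq> Nodes \<N> \<and> (\<forall>n'\<in>delta \<N> n a p. p \<in> ndom \<N> n'))"

definition deterministic :: "('p, 'n, 'r) nego \<Rightarrow> bool" where
  "deterministic \<N> \<longleftrightarrow>
     (\<forall>n\<in>Nodes \<N>. \<forall>a\<in>out \<N> n. \<forall>p\<in>ndom \<N> n. \<exists>n'. delta \<N> n a p = {n'})"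

text \<open>Configurations: maps from processes to sets of nodes (only values on Proc matter).\<close>
type_synonym ('p, 'n) config = "'p \<Rightarrow> 'n set"

definition C_init :: "('p, 'n, 'r) nego \<Rightarrow> ('p, 'n) config" where
  "C_init \<N> = (\<lambda>p. {ninit \<N>})"

definition is_C_fin :: "('p, 'n, 'r) nego \<Rightarrow> ('p, 'n) config \<Rightarrow> bool" where
  "is_C_fin \<N> C \<longleftrightarrow> (\<forall>p\<in>Proc \<N>. C p = {nfin \<N>})"

definition enabled :: "('p, 'n, 'r) nego \<Rightarrow> ('p, 'n) config \<Rightarrow> 'n \<Rightarrow> bool" where
  "enabled \<N> C n \<longleftrightarrow> n \<in> Nodes \<N> \<and> (\<forall>p\<in>ndom \<N> n. n \<in> C p)"

definition step :: "('p, 'n, 'r) nego \<Rightarrow> ('p, 'n) config \<Rightarrow> 'n \<times> 'r \<Rightarrow> ('p, 'n) config \<Rightarrow> bool" where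
  "step \<N> C x C' \<longleftrightarrow> (case x of (n, a) \<Rightarrow>
     enabled \<N> C n \<and> a \<in> out \<N> n \<and>
     C' = (\<lambda>p. if p \<in> ndom \<N> n then delta \<N> n a p else C p))"

fun run :: "('p, 'n, 'r) nego \<Rightarrow> ('p, 'n) config \<Rightarrow> ('n \<times> 'r) list \<Rightarrow> ('p, 'n) config \<Rightarrow> bool" where
  "run \<N> C [] C' \<longleftrightarrow> C' = C"
| "run \<N> C (x # w) C'' \<longleftrightarrow> (\<exists>C'. step \<N> C x C' \<and> run \<N> C' w C'')"

definition successful_run :: "('p, 'n, 'r) nego \<Rightarrow> ('n \<times> 'r) list \<Rightarrow> bool" where
  "successful_run \<N> w \<longleftrightarrow> (\<exists>C. run \<N> (C_init \<N>) w C \<and> is_C_fin \<N> C)"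

definition sound :: "('p, 'n, 'r) nego \<Rightarrow> bool" where
  "sound \<N> \<longleftrightarrow> (\<forall>w C. run \<N> (C_init \<N>) w C \<longrightarrow> (\<exists>w'. successful_run \<N> (w @ w')))"

definition graph_edges :: "('p, 'n, 'r) nego \<Rightarrow> ('n \<times> 'n) set" where
  "graph_edges \<N> = {(n, n'). n \<in> Nodes \<N> \<and>
      (\<exists>a\<in>out \<N> n. \<exists>p\<in>ndom \<N> n. n' \<in> delta \<N> n a p)}"

definition acyclic_nego :: "('p, 'n, 'r) nego \<Rightarrow> bool" where
  "acyclic_nego \<N> \<longleftrightarrow> acyclic (graph_edges \<N>)"

text \<open>Nodes occurring in a run: the executed nodes together with the final node,
  equivalently, the nodes appearing in the configurations along a successful run.\<close>
definition run_nodes :: "('p, 'n, 'r) nego \<Rightarrow> ('n \<times> 'r) list \<Rightarrow> 'n set" where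
  "run_nodes \<N> w = insert (nfin \<N>) (fst ` set w)"

datatype ('n, 'r) pos = EveP 'n | AdamP 'n 'r

definition game_move :: "('p, 'n, 'r) nego \<Rightarrow> 'n set \<Rightarrow> ('n, 'r) pos \<Rightarrow> ('n, 'r) pos \<Rightarrow> bool" where
  "game_move \<N> B x y \<longleftrightarrow> (case x of
       EveP n \<Rightarrow> n \<in> Nodes \<N> - B \<and> (\<exists>a\<in>out \<N> n. y = AdamP n a)
     | AdamP n a \<Rightarrow> n \<in> Nodes \<N> \<and> a \<in> out \<N> n \<and>
                    (\<exists>p\<in>ndom \<N> n. \<exists>n'. n' \<in> delta \<N> n a p \<and> y = EveP n'))"

definition fin_play :: "('p, 'n, 'r) nego \<Rightarrow> 'n set \<Rightarrow> ('n, 'r) pos list \<Rightarrow> bool" where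
  "fin_play \<N> B xs \<longleftrightarrow> xs \<noteq> [] \<and> hd xs = EveP (ninit \<N>) \<and>
     (\<forall>i. Suc i < length xs \<longrightarrow> game_move \<N> B (xs ! i) (xs ! Suc i)) \<and>
     (\<forall>y. \<not> game_move \<N> B (last xs) y)"

definition inf_play :: "('p, 'n, 'r) nego \<Rightarrow> 'n set \<Rightarrow> (nat \<Rightarrow> ('n, 'r) pos) \<Rightarrow> bool" where
  "inf_play \<N> B f \<longleftrightarrow> f 0 = EveP (ninit \<N>) \<and> (\<forall>i. game_move \<N> B (f i) (f (Suc i)))"

definition fin_respects :: "('n \<Rightarrow> 'r) \<Rightarrow> ('n, 'r) pos list \<Rightarrow> bool" where
  "fin_respects \<sigma> xs \<longleftrightarrow>
     (\<forall>i n. Suc i < length xs \<longrightarrow> xs ! i = EveP n \<longrightarrow> xs ! Suc i = AdamP n (\<sigma> n))"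

definition inf_respects :: "('n \<Rightarrow> 'r) \<Rightarrow> (nat \<Rightarrow> ('n, 'r) pos) \<Rightarrow> bool" where
  "inf_respects \<sigma> f \<longleftrightarrow> (\<forall>i n. f i = EveP n \<longrightarrow> f (Suc i) = AdamP n (\<sigma> n))"

definition eve_wins :: "('p, 'n, 'r) nego \<Rightarrow> 'n set \<Rightarrow> ('n, 'r) pos set \<Rightarrow> bool" where
  "eve_wins \<N> B P \<longleftrightarrow> EveP (nfin \<N>) \<in> P \<and> (\<forall>b\<in>B. EveP b \<notin> P)"

definition det_pos_strategy :: "('p, 'n, 'r) nego \<Rightarrow> ('n \<Rightarrow> 'r) \<Rightarrow> bool" where
  "det_pos_strategy \<N> \<sigma> \<longleftrightarrow> (\<forall>n\<in>Nodes \<N>. out \<N> n \<noteq> {} \<longrightarrow> \<sigma> n \<in> out \<N> n)"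

definition winning_strategy :: "('p, 'n, 'r) nego \<Rightarrow> 'n set \<Rightarrow> ('n \<Rightarrow> 'r) \<Rightarrow> bool" where
  "winning_strategy \<N> B \<sigma> \<longleftrightarrow> det_pos_strategy \<N> \<sigma> \<and>
     (\<forall>xs. fin_play \<N> B xs \<and> fin_respects \<sigma> xs \<longrightarrow> eve_wins \<N> B (set xs)) \<and>
     (\<forall>f. inf_play \<N> B f \<and> inf_respects \<sigma> f \<longrightarrow> eve_wins \<N> B (range f))"

definition reached_nodes :: "('p, 'n, 'r) nego \<Rightarrow> 'n set \<Rightarrow> ('n \<Rightarrow> 'r) \<Rightarrow> 'n set" where
  "reached_nodes \<N> B \<sigma> =
     {n. \<exists>xs. fin_play \<N> B xs \<and> fin_respects \<sigma> xs \<and> EveP n \<in> set xs} \<union>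
     {n. \<exists>f. inf_play \<N> B f \<and> inf_respects \<sigma> f \<and> EveP n \<in> range f}"

end

theory Submission
  imports Defs
begin

lemma run_append: "run N C (u @ v) C'' \<longleftrightarrow> (\<exists>C'. run N C u C' \<and> run N C' v C'')"
  by (induction u arbitrary: C) auto

lemma run_det: "run N C w C1 \<Longrightarrow> run N C w C2 \<Longrightarrow> C1 = C2"
proof (induction w arbitrary: C)
  case Nil thus ?case by simp
next
  case (Cons x w)
  then obtain D1 D2 where a: "step N C x D1" "run N D1 w C1" "step N C x D2" "run N D2 w C2" by auto
  have "D1 = D2" using a(1,3) by (auto simp: step_def split: prod.splits)
  thus ?case using Cons.IH a by blast
qed

lemma run_change: "run N C w C' \<Longrightarrow> C' p \<noteq> C p \<Longrightarrow> \<exists>x\<in>set w. fst x \<in> C p \<and> p \<in> ndom N (fst x)"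
proof (induction w arbitrary: C)
  case Nil thus ?case by simp
next
  case (Cons x w)
  obtain n a where x: "x = (n,a)" by (cases x)
  from Cons.prems obtain D where st: "step N C x D" and r: "run N D w C'" by auto
  show ?case
  proof (cases "p \<in> ndom N n")
    case True
    with st x have "n \<in> C p" by (auto simp: step_def enabled_def)
    with True x show ?thesis by auto
  next
    case False
    with st x have "D p = C p" by (auto simp: step_def)
    with Cons.IH[OF r] Cons.prems(2) show ?thesis by auto
  qed
qed

lemma run_reach_inv:
  assumes "run N C w C'" "\<forall>k\<in>C p. (z,k) \<in> (graph_edges N)\<^sup>+"
  shows "\<forall>k\<in>C' p. (z,k) \<in> (graph_edges N)\<^sup>+"
  using assms
proof (induction w arbitrary: C)
  case Nil thus ?case by simp
next
  case (Cons x w)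
  obtain n a where x: "x = (n,a)" by (cases x)
  from Cons.prems obtain D where st: "step N C x D" and r: "run N D w C'" by auto
  have "\<forall>k\<in>D p. (z,k) \<in> (graph_edges N)\<^sup>+"
  proof (cases "p \<in> ndom N n")
    case True
    with st x have nC: "n \<in> C p" and nN: "n \<in> Nodes N" and a: "a \<in> out N n"
      and D: "D p = delta N n a p" by (auto simp: step_def enabled_def)
    have zn: "(z,n) \<in> (graph_edges N)\<^sup>+" using nC Cons.prems(2) by blast
    show ?thesis
    proof
      fix k assume "k \<in> D p"
      hence "(n,k) \<in> graph_edges N" using D nN a True by (auto simp: graph_edges_def)
      thus "(z,k) \<in> (graph_edges N)\<^sup>+" using zn by (meson trancl_into_trancl)
    qed
  next
    case False
    with st x have "D p = C p" by (auto simp: step_def)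
    with Cons.prems(2) show ?thesis by simp
  qed
  thus ?case using Cons.IH r by blast
qed

lemma snoc_moves:
  assumes "\<forall>i. Suc i < length ps \<longrightarrow> P (ps!i) (ps!Suc i)" "ps \<noteq> []" "P (last ps) x"
  shows "\<forall>i. Suc i < length (ps@[x]) \<longrightarrow> P ((ps@[x])!i) ((ps@[x])!Suc i)"
proof (intro allI impI)
  fix i assume i: "Suc i < length (ps@[x])"
  show "P ((ps@[x])!i) ((ps@[x])!Suc i)"
  proof (cases "Suc i < length ps")
    case True thus ?thesis using assms(1) by (simp add: nth_append)
  next
    case False
    hence "i = length ps - 1" using i by simp
    thus ?thesis using assms(2,3) by (simp add: nth_append last_conv_nth)
  qed
qed

lemma snoc_respects:
  assumes "fin_respects \<sigma> ps" "ps \<noteq> []" "\<forall>n. last ps = EveP n \<longrightarrow> x = AdamP n (\<sigma> n)"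
  shows "fin_respects \<sigma> (ps@[x])"
  unfolding fin_respects_def
proof (intro allI impI)
  fix i n assume i: "Suc i < length (ps@[x])" and e: "(ps@[x])!i = EveP n"
  show "(ps@[x])!Suc i = AdamP n (\<sigma> n)"
  proof (cases "Suc i < length ps")
    case True thus ?thesis using assms(1) e by (simp add: nth_append fin_respects_def)
  next
    case False
    hence "i = length ps - 1" using i by simp
    thus ?thesis using assms(2,3) e by (simp add: nth_append last_conv_nth)
  qed
qed

inductive_set Rset :: "('p,'n,'r) nego \<Rightarrow> 'n set \<Rightarrow> ('n \<Rightarrow> 'r) \<Rightarrow> 'n set" for N B \<sigma> where
  R_init: "ninit N \<in> Rset N B \<sigma>"
| R_step: "n \<in> Rset N B \<sigma> \<Longrightarrow> n \<in> Nodes N \<Longrightarrow> n \<notin> B \<Longrightarrow> p \<in> ndom N n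
     \<Longrightarrow> n' \<in> delta N n (\<sigma> n) p \<Longrightarrow> n' \<in> Rset N B \<sigma>"

locale ctx =
  fixes N :: "('p,'n,'r) nego" and B :: "'n set" and \<sigma> :: "'n \<Rightarrow> 'r"
  assumes neg: "negotiation N" and sou: "sound N" and acy: "acyclic_nego N"
    and det: "deterministic N" and BN: "B \<subseteq> Nodes N" and win: "winning_strategy N B \<sigma>"
begin

lemma nego_facts: "finite (Proc N)" "finite (Nodes N)" "ninit N \<in> Nodes N" "nfin N \<in> Nodes N"
  "ndom N (ninit N) = Proc N" "ndom N (nfin N) = Proc N"
  using neg unfolding negotiation_def by simp_all

lemma dom_ne: "n \<in> Nodes N \<Longrightarrow> ndom N n \<noteq> {}"
  using neg unfolding negotiation_def by simp

lemma out_ne: "n \<in> Nodes N \<Longrightarrow> n \<noteq> nfin N \<Longrightarrow> out N n \<noteq> {}"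
  using neg unfolding negotiation_def by simp

lemma Proc_ne: "Proc N \<noteq> {}" using dom_ne[OF nego_facts(3)] nego_facts(5) by simp

lemma nego_D1: "\<forall>n\<in>Nodes N. \<forall>a p. delta N n a p \<noteq> {} \<longleftrightarrow> a \<in> out N n \<and> p \<in> ndom N n"
  using neg unfolding negotiation_def by (elim conjE)

lemma nego_D2: "\<forall>n\<in>Nodes N. \<forall>a\<in>out N n. \<forall>p\<in>ndom N n. delta N n a p \<subseteq> Nodes N"
  using neg unfolding negotiation_def by (elim conjE) blast

lemma nego_D3: "\<forall>n\<in>Nodes N. ndom N n \<subseteq> Proc N \<and> ndom N n \<noteq> {}"
  using neg unfolding negotiation_def by (elim conjE)

lemma delta_out: "n \<in> Nodes N \<Longrightarrow> n' \<in> delta N n a p \<Longrightarrow> a \<in> out N n \<and> p \<in> ndom N n"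
  using nego_D1 by blast

lemma delta_nodes: "n \<in> Nodes N \<Longrightarrow> n' \<in> delta N n a p \<Longrightarrow> n' \<in> Nodes N"
  using delta_out nego_D2 by blast

lemma dom_proc: "n \<in> Nodes N \<Longrightarrow> ndom N n \<subseteq> Proc N"
  using nego_D3 by blast

lemma R_nodes: "n \<in> Rset N B \<sigma> \<Longrightarrow> n \<in> Nodes N"
proof (induction rule: Rset.induct)
  case R_init show ?case by (rule nego_facts(3))
next
  case (R_step n p n') thus ?case using delta_nodes by blast
qed

lemma edges_nodes: "(n,k) \<in> (graph_edges N)\<^sup>+ \<Longrightarrow> k \<in> Nodes N"
proof (induction rule: trancl_induct)
  case (base y) thus ?case unfolding graph_edges_def using delta_nodes by blast
next
  case (step y z) thus ?case unfolding graph_edges_def using delta_nodes by blast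
qed

definition rank where "rank n = card {k. (n,k) \<in> (graph_edges N)\<^sup>+}"

lemma rank_less: assumes e: "(n,n') \<in> graph_edges N" shows "rank n' < rank n"
proof -
  have sub: "{k. (n',k) \<in> (graph_edges N)\<^sup>+} \<subseteq> {k. (n,k) \<in> (graph_edges N)\<^sup>+}"
    using e by (auto intro: trancl_into_trancl2)
  have "n' \<in> {k. (n,k) \<in> (graph_edges N)\<^sup>+}" using e by auto
  moreover have "n' \<notin> {k. (n',k) \<in> (graph_edges N)\<^sup>+}"
    using acy by (auto simp: acyclic_nego_def acyclic_def)
  ultimately have ps: "{k. (n',k) \<in> (graph_edges N)\<^sup>+} \<subset> {k. (n,k) \<in> (graph_edges N)\<^sup>+}"
    using sub by blast
  have "finite {k. (n,k) \<in> (graph_edges N)\<^sup>+}"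
    using nego_facts(2) edges_nodes by (auto intro: finite_subset)
  thus ?thesis unfolding rank_def using ps by (rule psubset_card_mono)
qed

lemma out_fin: "out N (nfin N) = {}"
proof (rule ccontr)
  assume "out N (nfin N) \<noteq> {}"
  then obtain a where a: "a \<in> out N (nfin N)" by blast
  have "run N (C_init N) [] (C_init N)" by simp
  with sou obtain w' where "successful_run N ([] @ w')" unfolding sound_def by blast
  then obtain Cf where r: "run N (C_init N) w' Cf" and f: "is_C_fin N Cf"
    by (auto simp: successful_run_def)
  define C2 where "C2 = (\<lambda>p. if p \<in> ndom N (nfin N) then delta N (nfin N) a p else Cf p)"
  have st: "step N Cf (nfin N, a) C2"
    using f a nego_facts unfolding step_def enabled_def is_C_fin_def C2_def by auto
  hence r2: "run N (C_init N) (w' @ [(nfin N,a)]) C2" using r by (auto simp: run_append)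
  with sou obtain w'' C3 where r3: "run N (C_init N) ((w' @ [(nfin N,a)]) @ w'') C3"
    and f3: "is_C_fin N C3" unfolding sound_def successful_run_def by blast
  then obtain C2' where "run N (C_init N) (w' @ [(nfin N,a)]) C2'" "run N C2' w'' C3"
    by (auto simp only: run_append)
  with r2 have r3': "run N C2 w'' C3" using run_det by metis
  obtain p where p: "p \<in> Proc N" using Proc_ne by blast
  have dp: "ndom N (nfin N) = Proc N" by (rule nego_facts)
  have nN: "nfin N \<in> Nodes N" by (rule nego_facts)
  have "\<forall>k\<in>C2 p. (nfin N,k) \<in> (graph_edges N)\<^sup>+"
    using p dp nN a by (auto simp: C2_def graph_edges_def)
  from run_reach_inv[OF r3' this] have "\<forall>k\<in>C3 p. (nfin N,k) \<in> (graph_edges N)\<^sup>+" .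
  moreover have "C3 p = {nfin N}" using f3 p by (simp add: is_C_fin_def)
  ultimately have "(nfin N, nfin N) \<in> (graph_edges N)\<^sup>+" by simp
  thus False using acy by (simp add: acyclic_nego_def acyclic_def)
qed

definition nxt :: "('n,'r) pos \<Rightarrow> ('n,'r) pos" where
  "nxt x = (case x of EveP n \<Rightarrow> AdamP n (\<sigma> n) | AdamP n a \<Rightarrow> (SOME y. game_move N B x y))"

lemma nxt_move: "game_move N B x y \<Longrightarrow> game_move N B x (nxt x)"
proof (cases x)
  case (EveP n)
  assume m: "game_move N B x y"
  with EveP have "n \<in> Nodes N" "out N n \<noteq> {}" "n \<notin> B" by (auto simp: game_move_def)
  moreover have "\<sigma> n \<in> out N n" using calculation win
    by (auto simp: winning_strategy_def det_pos_strategy_def)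
  ultimately show ?thesis using EveP by (auto simp: game_move_def nxt_def)
next
  case (AdamP n a)
  assume m: "game_move N B x y"
  thus ?thesis using AdamP by (simp add: nxt_def) (rule someI)
qed

lemma R_prefix: "n \<in> Rset N B \<sigma> \<Longrightarrow> \<exists>ps. ps \<noteq> [] \<and> hd ps = EveP (ninit N) \<and>
   (\<forall>i. Suc i < length ps \<longrightarrow> game_move N B (ps!i) (ps!Suc i)) \<and> fin_respects \<sigma> ps \<and> last ps = EveP n"
proof (induction rule: Rset.induct)
  case R_init show ?case by (rule exI[of _ "[EveP (ninit N)]"]) (simp add: fin_respects_def)
next
  case (R_step n p n')
  then obtain ps where ps: "ps \<noteq> []" "hd ps = EveP (ninit N)"
    "\<forall>i. Suc i < length ps \<longrightarrow> game_move N B (ps!i) (ps!Suc i)" "fin_respects \<sigma> ps" "last ps = EveP n"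
    by blast
  have a: "\<sigma> n \<in> out N n" using delta_out R_step by blast
  let ?ps1 = "ps @ [AdamP n (\<sigma> n)]"
  let ?ps2 = "?ps1 @ [EveP n']"
  have m1: "\<forall>i. Suc i < length ?ps1 \<longrightarrow> game_move N B (?ps1!i) (?ps1!Suc i)"
    using snoc_moves[OF ps(3) ps(1)] ps(5) a R_step by (auto simp: game_move_def)
  have m2: "\<forall>i. Suc i < length ?ps2 \<longrightarrow> game_move N B (?ps2!i) (?ps2!Suc i)"
    apply (rule snoc_moves[OF m1])
    using a R_step by (auto simp: game_move_def)
  have r1: "fin_respects \<sigma> ?ps1" using snoc_respects[OF ps(4) ps(1)] ps(5) by simp
  have r2: "fin_respects \<sigma> ?ps2" using snoc_respects[OF r1] by simp
  show ?case using m2 r2 ps(1,2) by (intro exI[of _ ?ps2]) simp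
qed

lemma extend:
  assumes ps: "ps \<noteq> []" "hd ps = EveP (ninit N)"
    "\<forall>i. Suc i < length ps \<longrightarrow> game_move N B (ps!i) (ps!Suc i)" "fin_respects \<sigma> ps"
  shows "(\<exists>xs. fin_play N B xs \<and> fin_respects \<sigma> xs \<and> set ps \<subseteq> set xs) \<or>
         (\<exists>f. inf_play N B f \<and> inf_respects \<sigma> f \<and> set ps \<subseteq> range f)"
proof -
  define L where "L = length ps - 1"
  define f where "f i = (if i < L then ps!i else (nxt ^^ (i-L)) (last ps))" for i
  have fps: "i < length ps \<Longrightarrow> f i = ps!i" for i
  proof (cases "i < L")
    case True thus ?thesis by (simp add: f_def)
  next
    case False
    assume "i < length ps"
    with False have "i = L" by (simp add: L_def)
    thus ?thesis using ps(1) by (simp add: f_def L_def last_conv_nth)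
  qed
  have fsuc: "L \<le> i \<Longrightarrow> f (Suc i) = nxt (f i)" for i
    by (auto simp: f_def Suc_diff_le)
  have mv: "i < L \<Longrightarrow> game_move N B (f i) (f (Suc i))" for i
    using ps(3) fps L_def by auto
  have rsp: "f i = EveP n \<Longrightarrow> f (Suc i) = AdamP n (\<sigma> n)" for i n
  proof (cases "i < L")
    case True
    assume "f i = EveP n"
    thus ?thesis using True ps(4) fps L_def by (auto simp: fin_respects_def)
  next
    case False
    assume "f i = EveP n"
    thus ?thesis using False fsuc by (simp add: nxt_def)
  qed
  have rng: "set ps \<subseteq> f ` {..<length ps}" by (auto simp: in_set_conv_nth fps)
  have f0: "f 0 = EveP (ninit N)" using fps[of 0] ps(1,2) by (simp add: hd_conv_nth)
  show ?thesis
  proof (cases "\<forall>i. game_move N B (f i) (f (Suc i))")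
    case True
    then have "inf_play N B f" using f0 by (simp add: inf_play_def)
    moreover have "inf_respects \<sigma> f" using rsp by (simp add: inf_respects_def)
    moreover have "set ps \<subseteq> range f" using rng by auto
    ultimately show ?thesis by blast
  next
    case False
    then obtain i where ni: "\<not> game_move N B (f i) (f (Suc i))"
      and lt: "\<forall>j<i. game_move N B (f j) (f (Suc j))"
      using exists_least_iff[of "\<lambda>i. \<not> game_move N B (f i) (f (Suc i))"] by blast
    have Li: "L \<le> i" using mv ni by (metis not_le)
    have nomv: "\<not> game_move N B (f i) y" for y using nxt_move fsuc[OF Li] ni by metis
    define xs where "xs = map f [0..<Suc i]"
    have "fin_play N B xs" unfolding fin_play_def xs_def
      using f0 lt nomv by (auto simp: hd_map last_map simp del: upt_Suc)
    moreover have "fin_respects \<sigma> xs" unfolding fin_respects_def xs_def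
      using rsp by (auto simp del: upt_Suc)
    moreover have "set ps \<subseteq> set xs"
    proof -
      have "{..<length ps} \<subseteq> {0..<Suc i}" using Li L_def by auto
      hence "set ps \<subseteq> f ` {0..<Suc i}" using rng by (meson image_mono subset_trans)
      thus ?thesis by (simp add: xs_def del: upt_Suc)
    qed
    ultimately show ?thesis by blast
  qed
qed

lemma play_R:
  assumes "g 0 = EveP (ninit N)"
    "\<forall>i. Suc i \<le> k \<longrightarrow> game_move N B (g i) (g (Suc i)) \<and> (\<forall>n. g i = EveP n \<longrightarrow> g (Suc i) = AdamP n (\<sigma> n))"
  shows "case g k of EveP n \<Rightarrow> n \<in> Rset N B \<sigma>
           | AdamP n a \<Rightarrow> n \<in> Rset N B \<sigma> \<and> n \<in> Nodes N \<and> n \<notin> B \<and> a = \<sigma> n"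
  using assms(2)
proof (induction k)
  case 0 thus ?case using assms(1) by (simp add: Rset.R_init)
next
  case (Suc k)
  hence IH: "case g k of EveP n \<Rightarrow> n \<in> Rset N B \<sigma>
           | AdamP n a \<Rightarrow> n \<in> Rset N B \<sigma> \<and> n \<in> Nodes N \<and> n \<notin> B \<and> a = \<sigma> n" by simp
  have mv: "game_move N B (g k) (g (Suc k))" and rs: "\<forall>n. g k = EveP n \<longrightarrow> g (Suc k) = AdamP n (\<sigma> n)"
    using Suc.prems by auto
  show ?case
  proof (cases "g k")
    case (EveP n) then have "g (Suc k) = AdamP n (\<sigma> n)" using rs by simp
    with mv EveP IH show ?thesis by (auto simp: game_move_def)
  next
    case (AdamP n a)
    with mv obtain p n' where "p \<in> ndom N n" "n' \<in> delta N n a p" "g (Suc k) = EveP n'"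
      by (auto simp: game_move_def)
    with IH AdamP show ?thesis by (auto intro: Rset.R_step)
  qed
qed

lemma reached_sub: "reached_nodes N B \<sigma> \<subseteq> Rset N B \<sigma>"
proof
  fix n assume "n \<in> reached_nodes N B \<sigma>"
  then consider (fin) xs where "fin_play N B xs" "fin_respects \<sigma> xs" "EveP n \<in> set xs"
    | (inf) f where "inf_play N B f" "inf_respects \<sigma> f" "EveP n \<in> range f"
    unfolding reached_nodes_def by blast
  then show "n \<in> Rset N B \<sigma>"
  proof cases
    case fin
    then obtain k where k: "k < length xs" "xs ! k = EveP n" by (auto simp: in_set_conv_nth)
    have "case (!) xs k of EveP n \<Rightarrow> n \<in> Rset N B \<sigma>
           | AdamP n a \<Rightarrow> n \<in> Rset N B \<sigma> \<and> n \<in> Nodes N \<and> n \<notin> B \<and> a = \<sigma> n"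
      apply (rule play_R)
      using fin k by (auto simp: fin_play_def fin_respects_def hd_conv_nth)
    thus ?thesis using k by simp
  next
    case inf
    then obtain k where k: "f k = EveP n" by auto
    have "case f k of EveP n \<Rightarrow> n \<in> Rset N B \<sigma>
           | AdamP n a \<Rightarrow> n \<in> Rset N B \<sigma> \<and> n \<in> Nodes N \<and> n \<notin> B \<and> a = \<sigma> n"
      apply (rule play_R)
      using inf by (auto simp: inf_play_def inf_respects_def)
    thus ?thesis using k by simp
  qed
qed

lemma R_reached: assumes "n \<in> Rset N B \<sigma>" shows "n \<in> reached_nodes N B \<sigma> \<and> n \<notin> B"
proof -
  obtain ps where ps: "ps \<noteq> []" "hd ps = EveP (ninit N)"
    "\<forall>i. Suc i < length ps \<longrightarrow> game_move N B (ps!i) (ps!Suc i)" "fin_respects \<sigma> ps" "last ps = EveP n"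
    using R_prefix[OF assms] by blast
  have inps: "EveP n \<in> set ps" using ps(1,5) last_in_set by metis
  from extend[OF ps(1-4)] show ?thesis
  proof
    assume "\<exists>xs. fin_play N B xs \<and> fin_respects \<sigma> xs \<and> set ps \<subseteq> set xs"
    then obtain xs where xs: "fin_play N B xs" "fin_respects \<sigma> xs" "set ps \<subseteq> set xs" by blast
    have "eve_wins N B (set xs)" using win xs by (auto simp: winning_strategy_def)
    thus ?thesis using xs inps unfolding reached_nodes_def eve_wins_def by blast
  next
    assume "\<exists>f. inf_play N B f \<and> inf_respects \<sigma> f \<and> set ps \<subseteq> range f"
    then obtain f where f: "inf_play N B f" "inf_respects \<sigma> f" "set ps \<subseteq> range f" by blast
    have "eve_wins N B (range f)" using win f by (auto simp: winning_strategy_def)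
    thus ?thesis using f inps unfolding reached_nodes_def eve_wins_def by blast
  qed
qed

definition Inv where "Inv C \<longleftrightarrow> (\<forall>p\<in>Proc N. \<exists>m\<in>Rset N B \<sigma>. C p = {m})"
definition mu where "mu C = (\<Sum>p\<in>Proc N. \<Sum>m\<in>C p. rank m)"

lemma build: "run N (C_init N) w0 C \<Longrightarrow> Inv C \<Longrightarrow> \<exists>w C'. run N C w C' \<and> is_C_fin N C' \<and> Inv C' \<and>
   (\<forall>x\<in>set w. fst x \<in> Rset N B \<sigma> \<and> snd x = \<sigma> (fst x))"
proof (induction C arbitrary: w0 rule: measure_induct_rule[of mu])
  case (less C)
  show ?case
  proof (cases "is_C_fin N C")
    case True thus ?thesis using less.prems by (intro exI[of _ "[]"] exI[of _ C]) auto
  next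
    case False
    from sou less.prems(1) obtain w' Cf where "run N (C_init N) (w0 @ w') Cf" and fCf: "is_C_fin N Cf"
      unfolding sound_def successful_run_def by blast
    then obtain C1 where r1: "run N (C_init N) w0 C1" "run N C1 w' Cf" by (auto simp: run_append)
    with less.prems(1) have "C1 = C" by (metis run_det)
    with r1 have rC: "run N C w' Cf" by simp
    have "w' \<noteq> []" using False fCf rC by auto
    then obtain n a w'' where "w' = (n,a) # w''" by (metis list.exhaust prod.exhaust)
    with rC obtain D where "step N C (n,a) D" by auto
    hence en: "enabled N C n" by (simp add: step_def)
    hence nN: "n \<in> Nodes N" and nC: "\<forall>p\<in>ndom N n. n \<in> C p" by (auto simp: enabled_def)
    obtain p0 where p0: "p0 \<in> ndom N n" using dom_ne[OF nN] by blast
    have p0P: "p0 \<in> Proc N" using dom_proc nN p0 by blast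
    from less.prems(2) p0P obtain m where "m \<in> Rset N B \<sigma>" "C p0 = {m}" by (auto simp: Inv_def)
    with nC p0 have nR: "n \<in> Rset N B \<sigma>" by auto
    have nnB: "n \<notin> B" using R_reached nR by blast
    have Cn: "p \<in> ndom N n \<Longrightarrow> C p = {n}" for p
      using less.prems(2) nC dom_proc[OF nN] by (force simp: Inv_def)
    have nfin: "n \<noteq> nfin N"
    proof
      assume "n = nfin N"
      then have "is_C_fin N C" using Cn nego_facts(6) by (auto simp: is_C_fin_def)
      with False show False by simp
    qed
    have sa: "\<sigma> n \<in> out N n" using win nN out_ne[OF nN nfin] by (auto simp: winning_strategy_def det_pos_strategy_def)
    define C2 where "C2 = (\<lambda>p. if p \<in> ndom N n then delta N n (\<sigma> n) p else C p)"
    have st2: "step N C (n, \<sigma> n) C2" using en sa by (simp add: step_def C2_def)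
    have r2: "run N (C_init N) (w0 @ [(n, \<sigma> n)]) C2" using less.prems(1) st2 by (auto simp: run_append)
    have succ: "p \<in> ndom N n \<Longrightarrow> \<exists>n'. C2 p = {n'} \<and> n' \<in> Rset N B \<sigma> \<and> (n,n') \<in> graph_edges N" for p
    proof -
      assume p: "p \<in> ndom N n"
      obtain n' where d: "delta N n (\<sigma> n) p = {n'}" using det nN sa p unfolding deterministic_def by blast
      have "n' \<in> Rset N B \<sigma>" using Rset.R_step[OF nR nN nnB p] d by simp
      moreover have "(n,n') \<in> graph_edges N" using nN sa p d by (auto simp: graph_edges_def)
      ultimately show ?thesis using p d by (auto simp: C2_def)
    qed
    have inv2: "Inv C2" unfolding Inv_def
    proof
      fix p assume pP: "p \<in> Proc N"
      show "\<exists>m\<in>Rset N B \<sigma>. C2 p = {m}"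
      proof (cases "p \<in> ndom N n")
        case True then show ?thesis using succ by blast
      next
        case False then show ?thesis using less.prems(2) pP by (simp add: Inv_def C2_def)
      qed
    qed
    have le: "(\<Sum>m\<in>C2 p. rank m) \<le> (\<Sum>m\<in>C p. rank m)" if "p \<in> Proc N" for p
    proof (cases "p \<in> ndom N n")
      case True
      then obtain n' where "C2 p = {n'}" "(n,n') \<in> graph_edges N" using succ by blast
      thus ?thesis using Cn[OF True] rank_less[of n n'] by simp
    next
      case False thus ?thesis by (simp add: C2_def)
    qed
    have lt: "(\<Sum>m\<in>C2 p0. rank m) < (\<Sum>m\<in>C p0. rank m)"
    proof -
      obtain n' where "C2 p0 = {n'}" "(n,n') \<in> graph_edges N" using succ p0 by blast
      thus ?thesis using Cn[OF p0] rank_less by auto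
    qed
    have fP: "finite (Proc N)" by (rule nego_facts)
    have "mu C2 < mu C" unfolding mu_def
      by (rule sum_strict_mono_ex1[OF fP]) (use le lt p0P in auto)
    from less.IH[OF this r2 inv2] obtain w C' where
      "run N C2 w C'" "is_C_fin N C'" "Inv C'" "\<forall>x\<in>set w. fst x \<in> Rset N B \<sigma> \<and> snd x = \<sigma> (fst x)"
      by blast
    thus ?thesis using st2 nR by (intro exI[of _ "(n, \<sigma> n) # w"] exI[of _ C']) auto
  qed
qed

lemma main: "\<exists>w. successful_run N w \<and> run_nodes N w = reached_nodes N B \<sigma>"
proof -
  have Inv0: "Inv (C_init N)" by (auto simp: Inv_def C_init_def intro: Rset.R_init)
  obtain w Cf where r: "run N (C_init N) w Cf" and f: "is_C_fin N Cf" and invf: "Inv Cf"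
    and ws: "\<forall>x\<in>set w. fst x \<in> Rset N B \<sigma> \<and> snd x = \<sigma> (fst x)"
    using build[of "[]" "C_init N"] Inv0 by auto
  have reach: "reached_nodes N B \<sigma> = Rset N B \<sigma>" using reached_sub R_reached by blast
  obtain p0 where p0: "p0 \<in> Proc N" using Proc_ne by blast
  have nfinR: "nfin N \<in> Rset N B \<sigma>" using invf f p0 by (force simp: Inv_def is_C_fin_def)
  have sub1: "run_nodes N w \<subseteq> Rset N B \<sigma>" using ws nfinR by (auto simp: run_nodes_def)
  have sub2: "Rset N B \<sigma> \<subseteq> run_nodes N w"
  proof
    fix n assume "n \<in> Rset N B \<sigma>" thus "n \<in> run_nodes N w"
    proof (induction rule: Rset.induct)
      case R_init
      show ?case
      proof (cases "ninit N = nfin N")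
        case True thus ?thesis by (simp add: run_nodes_def)
      next
        case False
        have "Cf p0 \<noteq> C_init N p0" using f p0 False by (auto simp: is_C_fin_def C_init_def)
        from run_change[OF r this] obtain x where "x \<in> set w" "fst x \<in> C_init N p0" by blast
        thus ?thesis by (force simp: run_nodes_def C_init_def)
      qed
    next
      case (R_step n p n')
      show ?case
      proof (cases "n' = nfin N")
        case True thus ?thesis by (simp add: run_nodes_def)
      next
        case False
        have nnf: "n \<noteq> nfin N" using out_fin delta_out R_step by blast
        with R_step.IH obtain x where x: "x \<in> set w" "fst x = n" by (auto simp: run_nodes_def)
        with ws have "x = (n, \<sigma> n)" by (metis prod.collapse)
        with x obtain u v where w: "w = u @ (n, \<sigma> n) # v" by (metis split_list)
        from r w obtain C1 C2 where "run N (C_init N) u C1" and st: "step N C1 (n,\<sigma> n) C2"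
          and rv: "run N C2 v Cf" by (auto simp: run_append)
        have sa: "\<sigma> n \<in> out N n" using delta_out R_step by blast
        obtain n'' where d: "delta N n (\<sigma> n) p = {n''}"
          using det R_step.hyps(2,4) sa unfolding deterministic_def by blast
        have C2p: "C2 p = {n'}" using st R_step d by (auto simp: step_def)
        have pP: "p \<in> Proc N" using dom_proc R_step by blast
        have "Cf p \<noteq> C2 p" using f pP False C2p by (auto simp: is_C_fin_def)
        from run_change[OF rv this] obtain y where "y \<in> set v" "fst y \<in> C2 p" by blast
        thus ?thesis using w C2p by (force simp: run_nodes_def)
      qed
    qed
  qed
  show ?thesis using r f sub1 sub2 reach unfolding successful_run_def by blast
qed

end

theorem lemma4p3:
  fixes \<N> :: "('p, 'n, 'r) nego" and B :: "'n set" and \<sigma> :: "'n \<Rightarrow> 'r"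
  assumes "negotiation \<N>" and "sound \<N>" and "acyclic_nego \<N>" and "deterministic \<N>"
    and "B \<subseteq> Nodes \<N>"
    and "winning_strategy \<N> B \<sigma>"
  shows "\<exists>w. successful_run \<N> w \<and> run_nodes \<N> w = reached_nodes \<N> B \<sigma>"
proof -
  interpret ctx \<N> B \<sigma> using assms by unfold_locales
  show ?thesis by (rule main)
qed

end
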